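(* Let $a>1$, $n\geq1$, $C_j(n,a)=\binom{n}{j}\left(\frac{1+a}{2}\right)^{n-j}\left(\frac{1-a}{2}\right)^j$, $w_j=-i(1-\frac{2j}{n})$, and $\sigma_n(x)=\sum_{j=0}^nC_j(n,a)A_{w_j}(x)$. Then $\sigma_n\in L^2(\mathbb{R})$ and for every $z\in\mathbb{C}$, $$F_n(z,a):=\sum_{j=0}^nC_j(n,a)e^{iz(1-\frac{2j}{n})}=\pi^{-1/4}\int_{\mathbb{R}}e^{-\frac12(z^2+x^2)+\sqrt2zx}\sigma_n(x)\,dx.$$
   Context: The Bargmann kernel is $A_w(x)=\pi^{-1/4}e^{-\frac12(\bar w^2+x^2)+\sqrt2\bar wx}$ for $w\in\mathbb{C}$, $x\in\mathbb{R}$. *)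

theory Defs
  imports "HOL-Analysis.Analysis"
begin

definition bargmann_kernel :: "complex \<Rightarrow> real \<Rightarrow> complex" where
  "bargmann_kernel w x =
     complex_of_real (pi powr (-1/4)) *
     exp (- (cnj w ^ 2 + complex_of_real x ^ 2) / 2 + complex_of_real (sqrt 2) * cnj w * complex_of_real x)"

definition coeffC :: "nat \<Rightarrow> real \<Rightarrow> nat \<Rightarrow> real" where
  "coeffC n a j = real (n choose j) * ((1 + a) / 2) ^ (n - j) * ((1 - a) / 2) ^ j"

definition wpt :: "nat \<Rightarrow> nat \<Rightarrow> complex" where
  "wpt n j = - \<i> * complex_of_real (1 - 2 * real j / real n)"

definition sigma_n :: "nat \<Rightarrow> real \<Rightarrow> real \<Rightarrow> complex" where
  "sigma_n n a x = (\<Sum>j=0..n. complex_of_real (coeffC n a j) * bargmann_kernel (wpt n j) x)"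

definition F_n :: "nat \<Rightarrow> complex \<Rightarrow> real \<Rightarrow> complex" where
  "F_n n z a = (\<Sum>j=0..n. complex_of_real (coeffC n a j) *
                 exp (\<i> * z * complex_of_real (1 - 2 * real j / real n)))"

end

theory Submission
  imports Defs "HOL-Probability.Characteristic_Functions"
begin




lemma gauss_char:
  fixes t :: real
  shows "has_bochner_integral lborel (\<lambda>u. complex_of_real (exp (-(u^2)/2)) * iexp (t*u))
           (complex_of_real (sqrt (2*pi) * exp (-(t^2)/2)))"
proof -
  have int: "integrable lborel (\<lambda>u. std_normal_density u *\<^sub>R iexp (t*u))"
    by (rule Bochner_Integration.integrable_bound[OF integrable_normal_density])
       (auto simp: norm_exp_i_times normal_density_nonneg)
  have "char std_normal_distribution t = (LINT u|lborel. std_normal_density u *\<^sub>R iexp (t*u))"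
    unfolding char_def by (rule integral_density) (auto simp: normal_density_nonneg)
  hence eq: "(LINT u|lborel. std_normal_density u *\<^sub>R iexp (t*u)) = complex_of_real (exp (-(t^2)/2))"
    using char_std_normal_distribution by simp
  have hb: "has_bochner_integral lborel (\<lambda>u. std_normal_density u *\<^sub>R iexp (t*u)) (complex_of_real (exp (-(t^2)/2)))"
    using has_bochner_integral_integrable[OF int] eq by simp
  have "has_bochner_integral lborel (\<lambda>u. complex_of_real (sqrt (2*pi)) * (std_normal_density u *\<^sub>R iexp (t*u)))
      (complex_of_real (sqrt (2*pi)) * complex_of_real (exp (-(t^2)/2)))"
    by (rule has_bochner_integral_mult_right[OF hb])
  then show ?thesis
    by (rule has_bochner_integral_cong[THEN iffD1, rotated -1])
       (auto simp: std_normal_density_def scaleR_conv_of_real)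
qed



lemma gauss_shift:
  fixes b :: complex
  shows "has_bochner_integral lborel (\<lambda>(x::real). exp (- (complex_of_real x ^ 2) + b * complex_of_real x))
           (complex_of_real (sqrt pi) * exp (b^2/4))"
proof -
  define p where "p = Re b"
  define q where "q = Im b"
  have b: "b = complex_of_real p + \<i> * complex_of_real q"
    by (simp add: p_def q_def complex_eq_iff)
  define f where "f = (\<lambda>(x::real). exp (- (complex_of_real x ^ 2) + b * complex_of_real x))"
  define K where "K = exp (complex_of_real (p^2/4) + \<i> * complex_of_real (q*p/2))"
  have s2: "sqrt 2 * sqrt 2 = (2::real)" by simp
  have key: "f (p/2 + (1/sqrt 2) * u) = K * (complex_of_real (exp (-(u^2)/2)) * iexp ((q / sqrt 2) * u))" for u
  proof -
    have E: "- (complex_of_real (p/2 + (1/sqrt 2) * u) ^ 2) + b * complex_of_real (p/2 + (1/sqrt 2) * u)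
        = (complex_of_real (p^2/4) + \<i> * complex_of_real (q*p/2)) + (complex_of_real (-(u^2)/2) + \<i> * complex_of_real ((q / sqrt 2) * u))"
      unfolding b by (simp add: complex_eq_iff power2_eq_square field_simps s2)
    show ?thesis
      unfolding f_def K_def E by (simp only: exp_add exp_of_real mult.assoc)
  qed
  have h1: "has_bochner_integral lborel (\<lambda>u. f (p/2 + (1/sqrt 2) * u))
       (K * complex_of_real (sqrt (2*pi) * exp (-((q / sqrt 2)^2)/2)))"
    unfolding key by (rule has_bochner_integral_mult_right[OF gauss_char])
  have c0: "(1/sqrt 2::real) \<noteq> 0" by simp
  have intf: "integrable lborel f"
    using h1 lborel_integrable_real_affine_iff[OF c0, of f "p/2"] has_bochner_integral_iff by blast
  have "integral\<^sup>L lborel f = \<bar>1/sqrt 2\<bar> *\<^sub>R integral\<^sup>L lborel (\<lambda>u. f (p/2 + (1/sqrt 2) * u))"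
    by (rule lborel_integral_real_affine[OF c0])
  also have "\<dots> = \<bar>1/sqrt 2\<bar> *\<^sub>R (K * complex_of_real (sqrt (2*pi) * exp (-((q / sqrt 2)^2)/2)))"
    using h1 has_bochner_integral_iff by metis
  also have "\<dots> = complex_of_real (sqrt pi) * exp (b^2/4)"
  proof -
    have e: "b^2/4 = complex_of_real (p^2/4) + \<i> * complex_of_real (q*p/2) + complex_of_real (-((q / sqrt 2)^2)/2)"
      unfolding b by (simp add: complex_eq_iff power2_eq_square field_simps s2)
    have r: "\<bar>1/sqrt 2\<bar> * sqrt (2*pi) = sqrt pi"
      by (simp add: real_sqrt_mult)
    show ?thesis
      unfolding e K_def exp_add scaleR_conv_of_real
      by (simp add: exp_of_real[symmetric] r[symmetric] mult_ac)
  qed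
  finally show ?thesis using intf unfolding f_def has_bochner_integral_iff by simp
qed


lemma gauss_gen:
  fixes A B b :: complex
  shows "has_bochner_integral lborel (\<lambda>(x::real). A * exp B * exp (- (complex_of_real x ^ 2) + b * complex_of_real x))
           (A * exp B * (complex_of_real (sqrt pi) * exp (b^2/4)))"
  by (rule has_bochner_integral_mult_right[OF gauss_shift])



lemma kernel_prod:
  "exp (- (z\<^sup>2 + complex_of_real x ^ 2) / 2 + complex_of_real (sqrt 2) * z * complex_of_real x) * bargmann_kernel w x
   = complex_of_real (pi powr (-1/4)) * exp (- (z\<^sup>2 + cnj w ^ 2) / 2)
     * exp (- (complex_of_real x ^ 2) + (complex_of_real (sqrt 2) * (z + cnj w)) * complex_of_real x)"
proof -
  have "(- (z\<^sup>2 + complex_of_real x ^ 2) / 2 + complex_of_real (sqrt 2) * z * complex_of_real x) +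
        (- (cnj w ^ 2 + complex_of_real x ^ 2) / 2 + complex_of_real (sqrt 2) * cnj w * complex_of_real x)
      = (- (z\<^sup>2 + cnj w ^ 2) / 2) + (- (complex_of_real x ^ 2) + (complex_of_real (sqrt 2) * (z + cnj w)) * complex_of_real x)"
    by (simp add: field_simps)
  then have "exp (- (z\<^sup>2 + complex_of_real x ^ 2) / 2 + complex_of_real (sqrt 2) * z * complex_of_real x) *
        exp (- (cnj w ^ 2 + complex_of_real x ^ 2) / 2 + complex_of_real (sqrt 2) * cnj w * complex_of_real x)
      = exp (- (z\<^sup>2 + cnj w ^ 2) / 2) * exp (- (complex_of_real x ^ 2) + (complex_of_real (sqrt 2) * (z + cnj w)) * complex_of_real x)"
    by (metis exp_add)
  then show ?thesis unfolding bargmann_kernel_def by (simp add: mult_ac)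
qed



lemma kernel_cnj_prod:
  "bargmann_kernel w x * cnj (bargmann_kernel v x)
   = complex_of_real (pi powr (-1/4) * pi powr (-1/4)) * exp (- (cnj w ^ 2 + v ^ 2) / 2)
     * exp (- (complex_of_real x ^ 2) + (complex_of_real (sqrt 2) * (cnj w + v)) * complex_of_real x)"
proof -
  have c: "cnj (bargmann_kernel v x) = complex_of_real (pi powr (-1/4)) *
     exp (- (v ^ 2 + complex_of_real x ^ 2) / 2 + complex_of_real (sqrt 2) * v * complex_of_real x)"
    unfolding bargmann_kernel_def by (simp add: exp_cnj)
  have "(- (cnj w ^ 2 + complex_of_real x ^ 2) / 2 + complex_of_real (sqrt 2) * cnj w * complex_of_real x) +
        (- (v ^ 2 + complex_of_real x ^ 2) / 2 + complex_of_real (sqrt 2) * v * complex_of_real x)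
      = (- (cnj w ^ 2 + v ^ 2) / 2) + (- (complex_of_real x ^ 2) + (complex_of_real (sqrt 2) * (cnj w + v)) * complex_of_real x)"
    by (simp add: field_simps)
  then have "exp (- (cnj w ^ 2 + complex_of_real x ^ 2) / 2 + complex_of_real (sqrt 2) * cnj w * complex_of_real x) *
        exp (- (v ^ 2 + complex_of_real x ^ 2) / 2 + complex_of_real (sqrt 2) * v * complex_of_real x)
      = exp (- (cnj w ^ 2 + v ^ 2) / 2) * exp (- (complex_of_real x ^ 2) + (complex_of_real (sqrt 2) * (cnj w + v)) * complex_of_real x)"
    by (metis exp_add)
  then show ?thesis unfolding c by (simp add: bargmann_kernel_def mult_ac)
qed


lemma kernel_int:
  "has_bochner_integral lborel
     (\<lambda>x. exp (- (z\<^sup>2 + complex_of_real x ^ 2) / 2 + complex_of_real (sqrt 2) * z * complex_of_real x) * bargmann_kernel w x)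
     (complex_of_real (pi powr (-1/4)) * complex_of_real (sqrt pi) * exp (z * cnj w))"
proof -
  have h: "has_bochner_integral lborel (\<lambda>(x::real). complex_of_real (pi powr (-1/4)) * exp (- (z\<^sup>2 + cnj w ^ 2) / 2)
     * exp (- (complex_of_real x ^ 2) + (complex_of_real (sqrt 2) * (z + cnj w)) * complex_of_real x))
     (complex_of_real (pi powr (-1/4)) * exp (- (z\<^sup>2 + cnj w ^ 2) / 2) * (complex_of_real (sqrt pi) * exp ((complex_of_real (sqrt 2) * (z + cnj w))^2/4)))"
    by (rule gauss_gen)
  have e1: "(complex_of_real (sqrt 2) * (z + cnj w))^2 = 2 * (z + cnj w)^2"
    by (simp add: power_mult_distrib flip: of_real_power)
  have e2: "(- (z\<^sup>2 + cnj w ^ 2) / 2) + 2 * (z + cnj w)^2/4 = z * cnj w"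
    by (simp add: power2_eq_square field_simps)
  have e3: "exp (- (z\<^sup>2 + cnj w ^ 2) / 2) * exp ((complex_of_real (sqrt 2) * (z + cnj w))^2/4) = exp (z * cnj w)"
    unfolding e1 e2[symmetric] by (rule exp_add[symmetric])
  have v: "complex_of_real (pi powr (-1/4)) * exp (- (z\<^sup>2 + cnj w ^ 2) / 2) * (complex_of_real (sqrt pi) * exp ((complex_of_real (sqrt 2) * (z + cnj w))^2/4))
      = complex_of_real (pi powr (-1/4)) * complex_of_real (sqrt pi) * exp (z * cnj w)"
    by (metis e3 mult.assoc mult.left_commute)
  show ?thesis
    using h unfolding v kernel_prod .
qed

theorem corollary4p4:
  fixes a :: real and n :: nat
  assumes "a > 1" and "n \<ge> 1"
  shows "sigma_n n a \<in> borel_measurable lborel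
         \<and> integrable lborel (\<lambda>x. (cmod (sigma_n n a x))\<^sup>2)
         \<and> (\<forall>z::complex.
              integrable lborel (\<lambda>x. exp (- (z\<^sup>2 + complex_of_real x ^ 2) / 2
                     + complex_of_real (sqrt 2) * z * complex_of_real x) * sigma_n n a x)
            \<and> F_n n z a = complex_of_real (pi powr (-1/4)) *
                 (LINT x|lborel. exp (- (z\<^sup>2 + complex_of_real x ^ 2) / 2
                     + complex_of_real (sqrt 2) * z * complex_of_real x) * sigma_n n a x))"
  proof -
  let ?K = "\<lambda>z x. exp (- (z\<^sup>2 + complex_of_real x ^ 2) / 2 + complex_of_real (sqrt 2) * z * complex_of_real x)"
  have meas: "sigma_n n a \<in> borel_measurable lborel"
    unfolding sigma_n_def bargmann_kernel_def
    unfolding measurable_lborel2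
    by (rule borel_measurable_continuous_onI) (auto intro!: continuous_intros)
  have L2: "integrable lborel (\<lambda>x. (cmod (sigma_n n a x))\<^sup>2)"
  proof -
    have eq: "(cmod (sigma_n n a x))\<^sup>2 = Re (\<Sum>j=0..n. \<Sum>k=0..n. complex_of_real (coeffC n a j) * complex_of_real (coeffC n a k)
        * (bargmann_kernel (wpt n j) x * cnj (bargmann_kernel (wpt n k) x)))" for x
    proof -
      have "complex_of_real ((cmod (sigma_n n a x))\<^sup>2) = sigma_n n a x * cnj (sigma_n n a x)"
        by (rule complex_norm_square)
      also have "\<dots> = (\<Sum>j=0..n. \<Sum>k=0..n. complex_of_real (coeffC n a j) * complex_of_real (coeffC n a k)
        * (bargmann_kernel (wpt n j) x * cnj (bargmann_kernel (wpt n k) x)))"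
        unfolding sigma_n_def cnj_sum sum_product by (simp add: mult_ac)
      finally show ?thesis by (metis Re_complex_of_real)
    qed
    have "integrable lborel (\<lambda>x. \<Sum>j=0..n. \<Sum>k=0..n. complex_of_real (coeffC n a j) * complex_of_real (coeffC n a k)
        * (bargmann_kernel (wpt n j) x * cnj (bargmann_kernel (wpt n k) x)))"
    proof (rule Bochner_Integration.integrable_sum)
      fix j assume "j \<in> {0..n}"
      show "integrable lborel (\<lambda>x. \<Sum>k=0..n. complex_of_real (coeffC n a j) * complex_of_real (coeffC n a k)
        * (bargmann_kernel (wpt n j) x * cnj (bargmann_kernel (wpt n k) x)))"
      proof (rule Bochner_Integration.integrable_sum)
        fix k assume "k \<in> {0..n}"
        have "integrable lborel (\<lambda>x. bargmann_kernel (wpt n j) x * cnj (bargmann_kernel (wpt n k) x))"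
          unfolding kernel_cnj_prod using gauss_gen has_bochner_integral_iff by blast
        then show "integrable lborel (\<lambda>x. complex_of_real (coeffC n a j) * complex_of_real (coeffC n a k)
          * (bargmann_kernel (wpt n j) x * cnj (bargmann_kernel (wpt n k) x)))"
          by (rule integrable_mult_right)
      qed
    qed
    then show ?thesis unfolding eq by (rule integrable_Re)
  qed
  have main: "has_bochner_integral lborel (\<lambda>x. ?K z x * sigma_n n a x)
       (\<Sum>j=0..n. complex_of_real (coeffC n a j) * (complex_of_real (pi powr (-1/4)) * complex_of_real (sqrt pi) * exp (z * cnj (wpt n j))))" for z
  proof -
    have "has_bochner_integral lborel (\<lambda>x. \<Sum>j=0..n. complex_of_real (coeffC n a j) * (?K z x * bargmann_kernel (wpt n j) x))
       (\<Sum>j=0..n. complex_of_real (coeffC n a j) * (complex_of_real (pi powr (-1/4)) * complex_of_real (sqrt pi) * exp (z * cnj (wpt n j))))"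
      by (intro has_bochner_integral_sum has_bochner_integral_mult_right kernel_int)
    moreover have "(\<lambda>x. \<Sum>j=0..n. complex_of_real (coeffC n a j) * (?K z x * bargmann_kernel (wpt n j) x)) = (\<lambda>x. ?K z x * sigma_n n a x)"
      unfolding sigma_n_def sum_distrib_left by (simp add: mult_ac)
    ultimately show ?thesis by simp
  qed
  have pp: "complex_of_real (pi powr (-1/4)) * (complex_of_real (pi powr (-1/4)) * complex_of_real (sqrt pi)) = 1"
  proof -
    have "pi powr (-1/4) * (pi powr (-1/4) * sqrt pi) = pi powr (-1/4) * pi powr (-1/4) * pi powr (1/2)"
      by (simp add: powr_half_sqrt)
    also have "\<dots> = pi powr (-1/4 + -1/4 + 1/2)"
      by (simp only: powr_add)
    also have "\<dots> = 1" by simp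
    finally have "pi powr (-1/4) * (pi powr (-1/4) * sqrt pi) = 1" .
    then show ?thesis by (metis of_real_1 of_real_mult)
  qed
  have F: "F_n n z a = complex_of_real (pi powr (-1/4)) * (LINT x|lborel. ?K z x * sigma_n n a x)" for z
  proof -
    have w: "z * cnj (wpt n j) = \<i> * z * complex_of_real (1 - 2 * real j / real n)" for j
      unfolding wpt_def by simp
    have "complex_of_real (pi powr (-1/4)) * (LINT x|lborel. ?K z x * sigma_n n a x)
       = (\<Sum>j=0..n. complex_of_real (coeffC n a j) * ((complex_of_real (pi powr (-1/4)) * (complex_of_real (pi powr (-1/4)) * complex_of_real (sqrt pi))) * exp (z * cnj (wpt n j))))"
    proof -
      have ie: "(LINT x|lborel. ?K z x * sigma_n n a x) = (\<Sum>j=0..n. complex_of_real (coeffC n a j) * (complex_of_real (pi powr (-1/4)) * complex_of_real (sqrt pi) * exp (z * cnj (wpt n j))))"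
        using main[of z] has_bochner_integral_iff by blast
      show ?thesis unfolding ie sum_distrib_left by (rule sum.cong) (simp_all only: mult_ac)
    qed
    also have "\<dots> = F_n n z a" unfolding pp F_n_def w by simp
    finally show ?thesis by simp
  qed
  have I: "integrable lborel (\<lambda>x. ?K z x * sigma_n n a x)" for z
    using main[of z] by (simp add: has_bochner_integral_iff)
  show ?thesis using meas L2 I F by simp
qed


end
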